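(* Let $X$ and $Y$ be nonempty compact metric spaces. Then $d^{us}_{GH}(X,Y)=d_{GH}(X,Y)$.
   Context: For a metric space, $|xy|$ denotes distance. A set-valued map $f:X\rightrightarrows Y$ assigns to each $x\in X$ a nonempty $f(x)\subseteq Y$ and is identified with its graph. A correspondence between $X$ and $Y$ is a subset $R\subseteq X\times Y$ whose projections to $X$ and to $Y$ are both surjective, regarded as the set-valued map $x\mapsto R(x)=\{y:(x,y)\in R\}$; $R^{-1}=\{(y,x):(x,y)\in R\}$; $\mathcal R(X,Y)$ is the set of all correspondences. The distortion of a nonempty $\sigma\subseteq X\times Y$ is $\operatorname{dis}\sigma=\sup\{||xx'|-|yy'||:(x,y),(x',y')\in\sigma\}\in[0,\infty]$, and $d_{GH}(X,Y)=\frac12\inf\{\operatorname{dis}R:R\in\mathcal R(X,Y)\}$. A set-valued map $f$ is upper semicontinuous if for every $x$ and every open $U\supseteq f(x)$ there is a neighborhood $V$ of $x$ with $f(x')\subseteq U$ for all $x'\in V$. $\mathcal R_{us}(X,Y)$ is the set of $R\in\mathcal R(X,Y)$ with both $R$ and $R^{-1}$ upper semicontinuous, and $d^{us}_{GH}(X,Y)=\frac12\inf\{\operatorname{dis}R:R\in\mathcal R_{us}(X,Y)\}$. *)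

theory Defs
  imports "HOL-Analysis.Analysis" "HOL-Library.Extended_Real"
begin

text \<open>Metric spaces are modelled as subsets X of a type of class metric_space,
 with the induced metric and subspace topology.\<close>

definition correspondence :: "'a set \<Rightarrow> 'b set \<Rightarrow> ('a \<times> 'b) set \<Rightarrow> bool" where
  "correspondence X Y R \<longleftrightarrow> R \<subseteq> X \<times> Y \<and> fst ` R = X \<and> snd ` R = Y"

definition distortion :: "('a::metric_space \<times> 'b::metric_space) set \<Rightarrow> ereal" where
  "distortion \<sigma> = (SUP p\<in>\<sigma> \<times> \<sigma>.
      ereal \<bar>dist (fst (fst p)) (fst (snd p)) - dist (snd (fst p)) (snd (snd p))\<bar>)"

definition usc_map :: "'a::metric_space set \<Rightarrow> 'b::metric_space set \<Rightarrow> ('a \<times> 'b) set \<Rightarrow> bool" where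
  "usc_map X Y R \<longleftrightarrow> (\<forall>x\<in>X. \<forall>U. openin (top_of_set Y) U \<and> R `` {x} \<subseteq> U \<longrightarrow>
      (\<exists>V. openin (top_of_set X) V \<and> x \<in> V \<and> (\<forall>x'\<in>V. R `` {x'} \<subseteq> U)))"

definition GH_dist :: "'a::metric_space set \<Rightarrow> 'b::metric_space set \<Rightarrow> ereal" where
  "GH_dist X Y = (INF R\<in>{R. correspondence X Y R}. distortion R) / 2"

definition GH_dist_us :: "'a::metric_space set \<Rightarrow> 'b::metric_space set \<Rightarrow> ereal" where
  "GH_dist_us X Y = (INF R\<in>{R. correspondence X Y R \<and> usc_map X Y R \<and> usc_map Y X (converse R)}.
      distortion R) / 2"

end

theory Submission
  imports Defs
begin

lemma usc_of_compact:
  fixes G :: "('a::metric_space \<times> 'b::metric_space) set"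
  assumes G: "compact G" "G \<subseteq> X \<times> Y"
  shows "usc_map X Y G"
  unfolding usc_map_def
proof (intro ballI allI impI)
  fix x U assume x: "x \<in> X" and U: "openin (top_of_set Y) U \<and> G `` {x} \<subseteq> U"
  then obtain Op where Op: "open Op" "U = Y \<inter> Op" by (meson openin_open)
  define K where "K = G \<inter> (UNIV \<times> (- Op))"
  have "closed (UNIV \<times> (- Op))" using Op by (intro closed_Times) auto
  hence "compact K" unfolding K_def using G(1) by (rule compact_Int_closed[rotated])
  hence "compact (fst ` K)" by (intro compact_continuous_image continuous_intros)
  hence cl: "closed (fst ` K)" by (rule compact_imp_closed)
  have xK: "x \<notin> fst ` K"
  proof
    assume "x \<in> fst ` K"
    then obtain y where y: "(x, y) \<in> G" "y \<notin> Op" unfolding K_def by auto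
    then have "y \<in> U" using U by blast
    then show False using Op y by blast
  qed
  show "\<exists>V. openin (top_of_set X) V \<and> x \<in> V \<and> (\<forall>x'\<in>V. G `` {x'} \<subseteq> U)"
  proof (intro exI conjI ballI)
    show "openin (top_of_set X) (X \<inter> - fst ` K)"
      using cl by (intro openin_open_Int) auto
    show "x \<in> X \<inter> - fst ` K" using x xK by auto
    fix x' assume "x' \<in> X \<inter> - fst ` K"
    show "G `` {x'} \<subseteq> U"
    proof
      fix y assume y: "y \<in> G `` {x'}"
      then have "y \<in> Y" using G by blast
      moreover have "y \<in> Op"
      proof (rule ccontr)
        assume "y \<notin> Op"
        then have "(x', y) \<in> K" using y unfolding K_def by auto
        then show False using \<open>x' \<in> X \<inter> - fst ` K\<close> by force
      qed
      ultimately show "y \<in> U" using Op by blast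
    qed
  qed
qed

lemma distortion_closure:
  fixes R :: "('a::metric_space \<times> 'b::metric_space) set"
  shows "distortion (closure R) \<le> distortion R"
proof -
  define g where "g = (\<lambda>p::(('a \<times> 'b) \<times> ('a \<times> 'b)). 
      \<bar>dist (fst (fst p)) (fst (snd p)) - dist (snd (fst p)) (snd (snd p))\<bar>)"
  have up: "\<And>q. q \<in> R \<times> R \<Longrightarrow> ereal (g q) \<le> distortion R"
    unfolding distortion_def g_def by (rule SUP_upper)
  have cont: "continuous_on UNIV g" unfolding g_def by (intro continuous_intros)
  have "ereal (g p) \<le> distortion R" if p: "p \<in> closure R \<times> closure R" for p
  proof (cases "distortion R")
    case (real c)
    have "closed {q. g q \<le> c}"
      using cont by (intro closed_Collect_le continuous_intros) auto
    moreover have "R \<times> R \<subseteq> {q. g q \<le> c}" using up real by auto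
    ultimately have "closure (R \<times> R) \<subseteq> {q. g q \<le> c}" by (rule closure_minimal[rotated])
    then show ?thesis using p real by (auto simp: closure_Times)
  next
    case PInf then show ?thesis by simp
  next
    case MInf
    have "R = {}"
    proof (rule ccontr)
      assume "R \<noteq> {}" then obtain r where "r \<in> R" by auto
      then have "ereal (g (r, r)) \<le> distortion R" by (intro up) auto
      then show False using MInf by simp
    qed
    then show ?thesis using p by simp
  qed
  then show ?thesis unfolding distortion_def g_def by (auto intro!: SUP_least simp: g_def)
qed

theorem mainTheorem5:
  fixes X :: "'a::metric_space set" and Y :: "'b::metric_space set"
  assumes "compact X" "X \<noteq> {}" "compact Y" "Y \<noteq> {}"
  shows "GH_dist_us X Y = GH_dist X Y"
proof -
  let ?A = "{R. correspondence X Y R}"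
  let ?B = "{R. correspondence X Y R \<and> usc_map X Y R \<and> usc_map Y X (converse R)}"
  have "(INF R\<in>?B. distortion R) = (INF R\<in>?A. distortion R)"
  proof (rule antisym)
    show "(INF R\<in>?A. distortion R) \<le> (INF R\<in>?B. distortion R)"
      by (rule INF_superset_mono) auto
    show "(INF R\<in>?B. distortion R) \<le> (INF R\<in>?A. distortion R)"
    proof (rule INF_greatest)
      fix R assume "R \<in> ?A"
      hence R: "R \<subseteq> X \<times> Y" "fst ` R = X" "snd ` R = Y" by (auto simp: correspondence_def)
      have cXY: "closed (X \<times> Y)" using assms by (intro compact_imp_closed compact_Times)
      have sub: "closure R \<subseteq> X \<times> Y" using R cXY by (simp add: closure_minimal)
      have cc: "compact (closure R)"
      proof -
        have "closure R = (X \<times> Y) \<inter> closure R" using sub by auto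
        then show ?thesis using assms by (metis closed_closure compact_Times compact_Int_closed)
      qed
      have "fst ` closure R = X"
      proof
        show "fst ` closure R \<subseteq> X" using sub by auto
        have "fst ` R \<subseteq> fst ` closure R" by (intro image_mono closure_subset)
        then show "X \<subseteq> fst ` closure R" using R by simp
      qed
      moreover have "snd ` closure R = Y"
      proof
        show "snd ` closure R \<subseteq> Y" using sub by auto
        have "snd ` R \<subseteq> snd ` closure R" by (intro image_mono closure_subset)
        then show "Y \<subseteq> snd ` closure R" using R by simp
      qed
      ultimately have corr: "correspondence X Y (closure R)" using sub by (simp add: correspondence_def)
      have conv: "converse (closure R) = (\<lambda>p. (snd p, fst p)) ` closure R" by force
      have "compact (converse (closure R))" unfolding conv
        using cc by (intro compact_continuous_image continuous_intros)
      moreover have "converse (closure R) \<subseteq> Y \<times> X" using sub by auto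
      ultimately have "usc_map Y X (converse (closure R))" by (rule usc_of_compact)
      moreover have "usc_map X Y (closure R)" using cc sub by (rule usc_of_compact)
      ultimately have "closure R \<in> ?B" using corr by auto
      hence "(INF R\<in>?B. distortion R) \<le> distortion (closure R)" by (rule INF_lower)
      also have "\<dots> \<le> distortion R" by (rule distortion_closure)
      finally show "(INF R\<in>?B. distortion R) \<le> distortion R" .
    qed
  qed
  then show ?thesis unfolding GH_dist_us_def GH_dist_def by simp
qed

end
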